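(* Let $m \geqslant 2$ and $r \geqslant 4$, and let $\mathcal{A}$ be a multi-family of subsets of $[m]$. If $\mathcal{A}$ is a double cover of $[m]$ and $|\mathcal{A}| \leqslant r$, then $$\left|\Big\{\{A,B\} \in \binom{\mathcal{A}}{2} : A \cap B \neq \emptyset\Big\}\right| \,\leqslant\, \lambda(r)\left(\sum_{A \in \mathcal{A}} |A| - 2m\right) + m.$$
   Context: $\lambda(r) = \frac{\binom{r}{2}-2}{r-2}$. A multi-family $\mathcal{A}$ is a double cover of $X$ if every element of $X$ lies in at least two members of $\mathcal{A}$ (counted with multiplicity). $\binom{\mathcal{A}}{2}$ denotes the unordered pairs of distinct members of the multi-family (members with equal underlying sets count as distinct), and $|\mathcal{A}|$ and the sum count members with multiplicity. *)

theory Defs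
  imports Main Complex_Main
begin

definition lam :: "nat \<Rightarrow> real" where
  "lam r = (real (r choose 2) - 2) / (real r - 2)"

(* A multi-family is represented as a list of sets (members counted with multiplicity,
   i.e. by position). It is a double cover of X if every element of X lies in at least
   two members. *)
definition double_cover :: "'a set list \<Rightarrow> 'a set \<Rightarrow> bool" where
  "double_cover As X \<longleftrightarrow> (\<forall>x\<in>X. card {i. i < length As \<and> x \<in> As ! i} \<ge> 2)"

definition intersecting_pairs :: "'a set list \<Rightarrow> nat" where
  "intersecting_pairs As = card {(i, j). i < j \<and> j < length As \<and> As ! i \<inter> As ! j \<noteq> {}}"

end

theory Submission
  imports Defs
begin

lemma choose_two_real: "real (n choose 2) = real n * (real n - 1) / 2"
proof (cases n)
  case 0 thus ?thesis by simp
next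
  case (Suc k)
  have "n choose 2 = n * k div 2" using choose_two Suc by simp
  moreover have "even (n * k)" using Suc by simp
  ultimately have "real (n choose 2) = real (n * k) / 2"
    by (simp add: real_of_nat_div)
  thus ?thesis using Suc by (simp add: algebra_simps)
qed

lemma sum_map_card_nth: "sum_list (map card (As::nat set list)) = (\<Sum>i<length As. card (As ! i))"
  by (subst sum_list_sum_nth) (simp add: lessThan_atLeast0)

lemma pairs_card:
  assumes "finite (D::nat set)"
  shows "card {(i, j). i \<in> D \<and> j \<in> D \<and> i < j} \<le> card D choose 2"
proof -
  let ?P = "{(i, j). i \<in> D \<and> j \<in> D \<and> i < j}"
  let ?f = "\<lambda>(i::nat, j::nat). {i, j}"
  have inj: "inj_on ?f ?P"
    by (auto simp: inj_on_def doubleton_eq_iff)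
  have img: "?f ` ?P \<subseteq> {S. S \<subseteq> D \<and> card S = 2}" by auto
  have fin: "finite {S. S \<subseteq> D \<and> card S = 2}" using assms by auto
  have "card ?P \<le> card {S. S \<subseteq> D \<and> card S = 2}"
    by (rule card_inj_on_le[OF inj img fin])
  also have "\<dots> = card D choose 2" using n_subsets[OF assms] by simp
  finally show ?thesis .
qed

lemma numeric:
  fixes d r :: nat
  assumes "r \<ge> 4" "2 \<le> d" "d \<le> r - 1"
  shows "real (d choose 2) \<le> lam r * (real d - 2) + 1"
proof -
  have c: "real (d choose 2) = real d * (real d - 1) / 2"
    using assms by (simp add: choose_two_real)
  have cr: "real (r choose 2) = real r * (real r - 1) / 2"
    by (simp add: choose_two_real)
  have r2: "real r - 2 > 0" using assms by simp
  have key: "(real d + 1) * (real r - 2) + 2 \<le> (real r - 2) * (real r + 1)"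
  proof -
    have "(real r - 2) * (real r - real d) \<ge> 2 * 1"
      by (rule mult_mono) (use assms in auto)
    thus ?thesis by (simp add: algebra_simps)
  qed
  have d2: "real d - 2 \<ge> 0" using assms by simp
  have "(real d - 2) * ((real d + 1) * (real r - 2) + 2) \<le> (real d - 2) * ((real r - 2) * (real r + 1))"
    by (rule mult_left_mono[OF key d2])
  hence "real d * (real d - 1) / 2 - 1 \<le> (real r * (real r - 1) / 2 - 2) / (real r - 2) * (real d - 2)"
    using r2 by (simp add: field_simps)
  thus ?thesis unfolding lam_def c cr by (simp add: mult.commute)
qed

lemma lam_nonneg: "r \<ge> 4 \<Longrightarrow> lam r \<ge> 0"
proof -
  assume r: "r \<ge> 4"
  have "real r * (real r - 1) \<ge> 4 * 3" by (rule mult_mono) (use r in auto)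
  thus ?thesis using r unfolding lam_def by (simp add: choose_two_real)
qed

theorem lemma3p5:
  fixes m r :: nat and As :: "nat set list"
  assumes "m \<ge> 2" and "r \<ge> 4"
    and "\<forall>A\<in>set As. A \<subseteq> {1..m}"
    and "double_cover As {1..m}"
    and "length As \<le> r"
  shows "real (intersecting_pairs As)
           \<le> lam r * (real (\<Sum>A\<leftarrow>As. card A) - 2 * real m) + real m"
proof -
  define n where "n = length As"
  define D where "D x = {i. i < n \<and> x \<in> As ! i}" for x
  define deg where "deg x = card (D x)" for x
  define g where "g x = lam r * (real (deg x) - 2) + 1" for x
  have finD: "finite (D x)" for x unfolding D_def by auto
  have degn: "deg x \<le> n" for x
  proof -
    have "D x \<subseteq> {..<n}" unfolding D_def by auto
    hence "card (D x) \<le> card {..<n}" by (rule card_mono[rotated]) simp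
    thus ?thesis unfolding deg_def by simp
  qed
  have deg2: "x \<in> {1..m} \<Longrightarrow> deg x \<ge> 2" for x
    using assms(4) unfolding double_cover_def deg_def D_def n_def by blast
  have sub: "i < n \<Longrightarrow> As ! i \<subseteq> {1..m}" for i
    using assms(3) unfolding n_def by auto
  have sumeq: "(\<Sum>A\<leftarrow>As. card A) = (\<Sum>x\<in>{1..m}. deg x)"
  proof -
    have "(\<Sum>A\<leftarrow>As. card A) = (\<Sum>i<n. card (As ! i))"
      unfolding n_def by (rule sum_map_card_nth)
    also have "\<dots> = (\<Sum>i<n. \<Sum>x\<in>{1..m}. if x \<in> As ! i then 1 else 0)"
    proof (rule sum.cong[OF refl])
      fix i assume "i \<in> {..<n}"
      hence "As ! i \<subseteq> {1..m}" using sub[of i] by simp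
      hence "{1..m} \<inter> As ! i = As ! i" by auto
      thus "card (As ! i) = (\<Sum>x\<in>{1..m}. if x \<in> As ! i then 1 else 0)"
        by (simp add: sum.If_cases)
    qed
    also have "\<dots> = (\<Sum>x\<in>{1..m}. \<Sum>i<n. if x \<in> As ! i then 1 else 0)"
      by (rule sum.swap)
    also have "\<dots> = (\<Sum>x\<in>{1..m}. deg x)"
    proof (rule sum.cong[OF refl])
      fix x
      have "D x = {..<n} \<inter> {i. x \<in> As ! i}" unfolding D_def by auto
      thus "(\<Sum>i<n. if x \<in> As ! i then 1 else 0) = deg x"
        unfolding deg_def by (simp add: sum.If_cases)
    qed
    finally show ?thesis .
  qed
  have rhs: "lam r * (real (\<Sum>A\<leftarrow>As. card A) - 2 * real m) + real m = (\<Sum>x\<in>{1..m}. g x)"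
    unfolding sumeq g_def
    by (simp add: sum.distrib sum_distrib_left sum_subtractf algebra_simps)
  define P where "P = {(i, j). i < j \<and> j < n \<and> As ! i \<inter> As ! j \<noteq> {}}"
  have ip: "intersecting_pairs As = card P" unfolding intersecting_pairs_def P_def n_def by simp
  have lamnn: "lam r \<ge> 0" using lam_nonneg assms(2) by simp
  have gge: "x \<in> {1..m} \<Longrightarrow> g x \<ge> 1" for x
    using deg2[of x] lamnn unfolding g_def by simp
  show ?thesis
  proof (cases "\<exists>x\<in>{1..m}. deg x \<ge> r")
    case True
    then obtain x0 where x0: "x0 \<in> {1..m}" "deg x0 \<ge> r" by auto
    have dr: "deg x0 = r" using degn[of x0] x0 assms(5) n_def by simp
    have nr: "n = r" using degn[of x0] x0 assms(5) n_def by simp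
    have "P \<subseteq> {(i, j). i \<in> {..<n} \<and> j \<in> {..<n} \<and> i < j}" unfolding P_def by auto
    hence "card P \<le> card {(i, j). i \<in> {..<n} \<and> j \<in> {..<n} \<and> i < j}"
      by (rule card_mono[rotated]) (rule finite_subset[of _ "{..<n} \<times> {..<n}"], auto)
    also have "\<dots> \<le> r choose 2" using pairs_card[of "{..<n}"] nr by simp
    finally have cP: "card P \<le> r choose 2" .
    have gx0: "g x0 = real (r choose 2) - 1"
    proof -
      have "real r - 2 > 0" using assms(2) by simp
      thus ?thesis unfolding g_def dr lam_def by (simp add: field_simps)
    qed
    obtain y where y: "y \<in> {1..m}" "y \<noteq> x0"
    proof (cases "x0 = 1")
      case True thus ?thesis using that[of 2] assms(1) by auto
    next
      case False thus ?thesis using that[of 1] assms(1) by auto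
    qed
    have "(\<Sum>x\<in>{1..m}. g x) = g x0 + (\<Sum>x\<in>{1..m} - {x0}. g x)"
      using x0(1) by (simp add: sum.remove)
    also have "(\<Sum>x\<in>{1..m} - {x0}. g x) = g y + (\<Sum>x\<in>{1..m} - {x0} - {y}. g x)"
      using y by (subst sum.remove[of _ y]) auto
    also have "(\<Sum>x\<in>{1..m} - {x0} - {y}. g x) \<ge> 0"
      by (rule sum_nonneg) (use gge in force)
    ultimately have "(\<Sum>x\<in>{1..m}. g x) \<ge> real (r choose 2)"
      using gge[OF y(1)] gx0 by linarith
    moreover have "real (card P) \<le> real (r choose 2)" using cP by (simp only: of_nat_le_iff)
    ultimately show ?thesis unfolding rhs ip by linarith
  next
    case False
    have cover: "P \<subseteq> (\<Union>x\<in>{1..m}. {(i, j). i \<in> D x \<and> j \<in> D x \<and> i < j})"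
    proof
      fix p assume "p \<in> P"
      then obtain i j x where p: "p = (i, j)" "i < j" "j < n" "x \<in> As ! i" "x \<in> As ! j"
        unfolding P_def by auto
      hence "x \<in> {1..m}" using sub[of i] by auto
      thus "p \<in> (\<Union>x\<in>{1..m}. {(i, j). i \<in> D x \<and> j \<in> D x \<and> i < j})"
        using p unfolding D_def by auto
    qed
    have "card P \<le> card (\<Union>x\<in>{1..m}. {(i, j). i \<in> D x \<and> j \<in> D x \<and> i < j})"
    proof (rule card_mono[OF _ cover])
      have "finite {(i, j). i \<in> D x \<and> j \<in> D x \<and> i < j}" for x
        by (rule finite_subset[of _ "D x \<times> D x"]) (auto simp: finD)
      thus "finite (\<Union>x\<in>{1..m}. {(i, j). i \<in> D x \<and> j \<in> D x \<and> i < j})" by simp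
    qed
    also have "\<dots> \<le> (\<Sum>x\<in>{1..m}. card {(i, j). i \<in> D x \<and> j \<in> D x \<and> i < j})"
      by (rule card_UN_le) simp
    also have "\<dots> \<le> (\<Sum>x\<in>{1..m}. deg x choose 2)"
      by (rule sum_mono) (simp add: deg_def pairs_card finD)
    finally have "real (card P) \<le> (\<Sum>x\<in>{1..m}. real (deg x choose 2))"
      by (simp add: of_nat_le_iff flip: of_nat_sum)
    also have "\<dots> \<le> (\<Sum>x\<in>{1..m}. g x)"
    proof (rule sum_mono)
      fix x assume x: "x \<in> {1..m}"
      have "deg x \<le> r - 1" using False x by force
      thus "real (deg x choose 2) \<le> g x"
        unfolding g_def using numeric[OF assms(2) deg2[OF x]] by simp
    qed
    finally show ?thesis using rhs ip by simp
  qed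
qed

end
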